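(* Let $\mathbb{K}\in\{\mathbb{R},\mathbb{C}\}$, set $c_{\mathbb{K}}=1$ if $\mathbb{K}=\mathbb{R}$ and $c_{\mathbb{K}}=2$ if $\mathbb{K}=\mathbb{C}$, let $d\ge 2$, and let $x_1,\dots,x_N\in\mathbb{K}^d\setminus\{0\}$. Let $\mathcal{HP}_d^+(\mathbb{K})$ be the set of positive definite (symmetric if $\mathbb{K}=\mathbb{R}$, Hermitian if $\mathbb{K}=\mathbb{C}$) $d\times d$ matrices of unit determinant, and define on it $$l(R)=-c_{\mathbb{K}}\,\frac{d-1}{2N}\sum_{n=1}^N \log\left(x_n^\dagger R^{-1}x_n\right).$$ If $R^\star\in\mathcal{HP}_d^+(\mathbb{K})$ maximizes $l$ over $\mathcal{HP}_d^+(\mathbb{K})$, then there exists a constant $c>0$ such that $$R^\star = c\sum_{n=1}^N \frac{x_n x_n^\dagger}{x_n^\dagger (R^\star)^{-1} x_n},$$ i.e. $R^\star$ is (a normalized version of) Tyler's fixed-point estimator. In the paper's interpretation, $l$ is, up to additive constants, the log-likelihood of $N$ i.i.d. samples under a real elliptically symmetric model (resp. a complex elliptically symmetric model, with the samples' circular symmetry taken into account) with correlation matrix $R$, maximized over all radial distributions; hence Tyler's estimator is a maximum likelihood estimate of the correlation matrix over all such models.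
   Context: $X^\dagger$ denotes the transpose of a real matrix/vector or the conjugate transpose of a complex one. A (real) elliptically symmetric distribution on $\mathbb{R}^d$ with correlation matrix $R$ (normalized by $|R|=1$) and radial distribution $Q$ (any probability measure on $\mathbb{R}_+$) is the law of $L(R)\,r\,u$ where $R=L(R)L(R)^\dagger$ is the Cholesky factorization, $r\sim Q$ and $u$ is independent of $r$ and uniform on the unit sphere of $\mathbb{R}^d$; complex elliptically symmetric distributions are defined identically on $\mathbb{C}^d$ with $u$ uniform on the unit sphere of $\mathbb{C}^d$. The paper defines the log-likelihood of a model $P$ for a sampling distribution $S$ as $-H(S|P)$ (minus the KL divergence), with a single sample $x_0$ represented by the Dirac mass at $x_0$ (in the complex case, by the Dirac mass on the phase orbit $\{ux_0: |u|=1\}$ averaged uniformly over phases), and derives that after maximizing over $Q$ the likelihood reduces, up to additive constants, to $l(R)$ above. *)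

theory Defs
  imports "HOL-Analysis.Analysis"
begin

definition HP_real :: "(real^'n^'n) set" where
  "HP_real = {R. transpose R = R \<and> (\<forall>v. v \<noteq> 0 \<longrightarrow> v \<bullet> (R *v v) > 0) \<and> det R = 1}"

definition quad_real :: "real^'n^'n \<Rightarrow> real^'n \<Rightarrow> real" where
  "quad_real R v = v \<bullet> (matrix_inv R *v v)"

definition outer_real :: "real^'n \<Rightarrow> real^'n^'n" where
  "outer_real v = (\<chi> i j. v $ i * v $ j)"

definition l_real :: "nat \<Rightarrow> (nat \<Rightarrow> real^'n) \<Rightarrow> real^'n^'n \<Rightarrow> real" where
  "l_real N x R = - 1 * (real CARD('n) - 1) / (2 * real N) * (\<Sum>n<N. ln (quad_real R (x n)))"

definition cadj :: "complex^'n^'m \<Rightarrow> complex^'m^'n" where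
  "cadj A = (\<chi> i j. cnj (A $ j $ i))"

definition cdot :: "complex^'n \<Rightarrow> complex^'n \<Rightarrow> complex" where
  "cdot v w = (\<Sum>i\<in>UNIV. cnj (v $ i) * w $ i)"

definition HP_complex :: "(complex^'n^'n) set" where
  "HP_complex = {R. cadj R = R \<and>
     (\<forall>v. v \<noteq> 0 \<longrightarrow> Im (cdot v (R *v v)) = 0 \<and> Re (cdot v (R *v v)) > 0) \<and> det R = 1}"

text \<open>x^dagger R^{-1} x (a positive real number for R in HP_complex, x nonzero).\<close>
definition quad_complex :: "complex^'n^'n \<Rightarrow> complex^'n \<Rightarrow> real" where
  "quad_complex R v = Re (cdot v (matrix_inv R *v v))"

definition outer_complex :: "complex^'n \<Rightarrow> complex^'n^'n" where
  "outer_complex v = (\<chi> i j. v $ i * cnj (v $ j))"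

definition l_complex :: "nat \<Rightarrow> (nat \<Rightarrow> complex^'n) \<Rightarrow> complex^'n^'n \<Rightarrow> real" where
  "l_complex N x R = - 2 * (real CARD('n) - 1) / (2 * real N) * (\<Sum>n<N. ln (quad_complex R (x n)))"

end

theory Submission
  imports Defs
begin


lemma inv_props:
  fixes A :: "'a::field^'n^'n"
  assumes "invertible A"
  shows "A ** matrix_inv A = mat 1" "matrix_inv A ** A = mat 1"
proof -
  have "\<exists>A'. A ** A' = mat 1 \<and> A' ** A = mat 1" using assms unfolding invertible_def by blast
  hence "A ** matrix_inv A = mat 1 \<and> matrix_inv A ** A = mat 1"
    unfolding matrix_inv_def by (rule someI_ex)
  thus "A ** matrix_inv A = mat 1" "matrix_inv A ** A = mat 1" by auto
qed

lemma inv_unique: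
  fixes A B :: "'a::field^'n^'n"
  assumes "invertible A" "B ** A = mat 1"
  shows "matrix_inv A = B"
proof -
  have "B = B ** (A ** matrix_inv A)" using inv_props(1)[OF assms(1)] by simp
  also have "\<dots> = matrix_inv A" by (simp add: matrix_mul_assoc assms(2))
  finally show ?thesis by simp
qed

lemma inv_invertible:
  fixes A :: "'a::field^'n^'n"
  assumes "invertible A" shows "invertible (matrix_inv A)"
  using inv_props[OF assms] unfolding invertible_def by blast

lemma inv_inv:
  fixes A :: "'a::field^'n^'n"
  assumes "invertible A" shows "matrix_inv (matrix_inv A) = A"
  by (rule inv_unique[OF inv_invertible[OF assms] inv_props(1)[OF assms]])

lemma det_inv:
  fixes A :: "'a::field^'n^'n"
  assumes "invertible A" shows "det (matrix_inv A) = 1 / det A"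
proof -
  have "det A * det (matrix_inv A) = 1"
    using inv_props(1)[OF assms] by (metis det_I det_mul)
  moreover have "det A \<noteq> 0" using assms invertible_det_nz by blast
  ultimately show ?thesis by (simp add: field_simps)
qed

lemma inv_apply:
  fixes A :: "'a::field^'n^'n"
  assumes "invertible A" shows "A *v (matrix_inv A *v v) = v" "matrix_inv A *v (A *v v) = v"
  using inv_props[OF assms] by (simp_all add: matrix_vector_mul_assoc)

lemma invertible_of_det:
  fixes A :: "'a::field^'n^'n"
  assumes "det A \<noteq> 0" shows "invertible A"
  using assms invertible_det_nz by blast

lemma invertible_inj:
  fixes A :: "'a::field^'n^'n"
  assumes "\<And>v. A *v v = 0 \<Longrightarrow> v = 0" shows "invertible A"
proof -
  have "inj ((*v) A)"
  proof (rule injI)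
    fix u v assume "A *v u = A *v v"
    hence "A *v (u - v) = 0" by (simp add: matrix_vector_mult_diff_distrib)
    thus "u = v" using assms by fastforce
  qed
  thus ?thesis using matrix_left_invertible_injective invertible_left_inverse by blast
qed

section \<open>Real\<close>

definition spd :: "real^'n^'n \<Rightarrow> bool" where
  "spd A \<longleftrightarrow> transpose A = A \<and> (\<forall>v. v \<noteq> 0 \<longrightarrow> v \<bullet> (A *v v) > 0)"

lemma sym_inner:
  fixes A :: "real^'n^'n"
  assumes "transpose A = A"
  shows "u \<bullet> (A *v w) = w \<bullet> (A *v u)"
proof -
  have "u \<bullet> (A *v w) = (u v* A) \<bullet> w" by (simp add: dot_lmul_matrix)
  also have "u v* A = A *v u" using vector_transpose_matrix[of u A] assms by simp
  finally show ?thesis by (simp add: inner_commute)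
qed

lemma spd_invertible: "spd A \<Longrightarrow> invertible A"
  unfolding spd_def
  apply (rule invertible_inj)
  by (metis inner_zero_right less_irrefl)

lemma spd_inv:
  fixes A :: "real^'n^'n"
  assumes "spd A" shows "spd (matrix_inv A)"
proof -
  have iA: "invertible A" using spd_invertible assms by blast
  have sA: "transpose A = A" using assms spd_def by blast
  have "transpose (matrix_inv A) ** A = mat 1"
    by (metis inv_props(1)[OF iA] sA matrix_transpose_mul transpose_mat)
  hence t: "transpose (matrix_inv A) = matrix_inv A" using inv_unique[OF iA] by metis
  have "v \<bullet> (matrix_inv A *v v) > 0" if "v \<noteq> 0" for v
  proof -
    define w where "w = matrix_inv A *v v"
    have v: "A *v w = v" unfolding w_def by (rule inv_apply(1)[OF iA])
    have "w \<noteq> 0" using that v by auto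
    hence "w \<bullet> (A *v w) > 0" using assms spd_def by blast
    hence "(A *v w) \<bullet> w > 0" by (simp add: inner_commute)
    thus ?thesis using v unfolding w_def by (simp add: inner_commute)
  qed
  thus ?thesis using t spd_def by blast
qed

lemma HP_real_spd: "R \<in> HP_real \<Longrightarrow> spd R"
  unfolding HP_real_def spd_def by auto

lemma pert_real:
  fixes Rs F :: "real^'n^'n"
  assumes R: "Rs \<in> HP_real" and F: "det F = 1"
  defines "Rt \<equiv> matrix_inv (transpose F ** matrix_inv Rs ** F)"
  shows "Rt \<in> HP_real" "quad_real Rt v = (F *v v) \<bullet> (matrix_inv Rs *v (F *v v))"
proof -
  define S where "S = matrix_inv Rs"
  have sR: "spd Rs" using R HP_real_spd by blast
  have iR: "invertible Rs" using spd_invertible sR by blast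
  have sS: "spd S" using spd_inv sR S_def by blast
  have dS: "det S = 1" using det_inv[OF iR] R unfolding S_def HP_real_def by simp
  have iF: "invertible F" using invertible_of_det[of F] F by simp
  define St where "St = transpose F ** S ** F"
  have St_apply: "u \<bullet> (St *v u) = (F *v u) \<bullet> (S *v (F *v u))" for u
  proof -
    have "St *v u = transpose F *v (S *v (F *v u))" unfolding St_def by (simp add: matrix_vector_mul_assoc matrix_mul_assoc)
    moreover have "u \<bullet> (transpose F *v w) = (F *v u) \<bullet> w" for w
      using dot_lmul_matrix[of u "transpose F" w] vector_transpose_matrix[of u F] by simp
    ultimately show ?thesis by simp
  qed
  have "spd St"
    unfolding spd_def
  proof (intro conjI allI impI)
    show "transpose St = St" using sS unfolding St_def spd_def
      by (simp add: matrix_transpose_mul matrix_mul_assoc)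
    fix u :: "real^'n" assume "u \<noteq> 0"
    hence "F *v u \<noteq> 0" using inv_apply(2)[OF iF, of u] by auto
    thus "u \<bullet> (St *v u) > 0" using sS spd_def St_apply by auto
  qed
  have dSt: "det St = 1" unfolding St_def by (simp add: det_mul F dS)
  have iSt: "invertible St" using spd_invertible \<open>spd St\<close> by blast
  have "Rt = matrix_inv St" unfolding Rt_def St_def S_def ..
  show "Rt \<in> HP_real"
    using spd_inv[OF \<open>spd St\<close>] det_inv[OF iSt] dSt \<open>Rt = matrix_inv St\<close>
    unfolding HP_real_def spd_def by auto
  show "quad_real Rt v = (F *v v) \<bullet> (matrix_inv Rs *v (F *v v))"
    unfolding quad_real_def \<open>Rt = matrix_inv St\<close> inv_inv[OF iSt] St_apply S_def ..
qed

lemma stationary_real: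
  fixes x a b :: "nat \<Rightarrow> real^'n" and Rs :: "real^'n^'n" and F :: "real \<Rightarrow> real^'n^'n"
    and \<alpha> \<beta> :: "real \<Rightarrow> real"
  assumes R: "Rs \<in> HP_real" and opt: "\<forall>R\<in>HP_real. l_real N x R \<le> l_real N x Rs"
    and x: "\<forall>n<N. x n \<noteq> 0" and d2: "CARD('n) \<ge> 2" and N: "N \<ge> 1"
    and dl: "\<delta> > 0" and Fdet: "\<And>t. \<bar>t\<bar> < \<delta> \<Longrightarrow> det (F t) = 1"
    and Fx: "\<And>t n. \<bar>t\<bar> < \<delta> \<Longrightarrow> F t *v x n = x n + \<alpha> t *\<^sub>R a n + \<beta> t *\<^sub>R b n"
    and da: "(\<alpha> has_real_derivative \<alpha>') (at 0)" "\<alpha> 0 = 0"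
    and db: "(\<beta> has_real_derivative \<beta>') (at 0)" "\<beta> 0 = 0"
  shows "(\<Sum>n<N. (\<alpha>' * (a n \<bullet> (matrix_inv Rs *v x n)) + \<beta>' * (b n \<bullet> (matrix_inv Rs *v x n)))
            / quad_real Rs (x n)) = 0"
proof -
  define S where "S = matrix_inv Rs"
  have sS: "spd S" using spd_inv HP_real_spd R S_def by blast
  hence tS: "transpose S = S" using spd_def by blast
  define q0 where "q0 n = quad_real Rs (x n)" for n
  have q0: "q0 n = x n \<bullet> (S *v x n)" for n unfolding q0_def quad_real_def S_def ..
  have q0pos: "q0 n > 0" if "n < N" for n using x that sS q0 spd_def by auto
  define h where "h n t = (x n + \<alpha> t *\<^sub>R a n + \<beta> t *\<^sub>R b n) \<bullet> (S *v (x n + \<alpha> t *\<^sub>R a n + \<beta> t *\<^sub>R b n))" for n t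
  have hexp: "h n t = q0 n + 2 * \<alpha> t * (a n \<bullet> (S *v x n)) + 2 * \<beta> t * (b n \<bullet> (S *v x n))
      + (\<alpha> t)^2 * (a n \<bullet> (S *v a n)) + 2 * \<alpha> t * \<beta> t * (a n \<bullet> (S *v b n)) + (\<beta> t)^2 * (b n \<bullet> (S *v b n))" for n t
  proof -
    have e1: "x n \<bullet> (S *v a n) = a n \<bullet> (S *v x n)" and e2: "x n \<bullet> (S *v b n) = b n \<bullet> (S *v x n)"
      and e3: "b n \<bullet> (S *v a n) = a n \<bullet> (S *v b n)" using sym_inner[OF tS] by auto
    show ?thesis unfolding h_def q0
      by (simp add: inner_add_left inner_add_right matrix_vector_right_distrib matrix_vector_mult_scaleR e1 e2 e3
          algebra_simps power2_eq_square)
  qed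
  define g where "g t = (\<Sum>n<N. ln (h n t))" for t
  define K where "K = - 1 * (real CARD('n) - 1) / (2 * real N)"
  have K: "K < 0" using d2 N unfolding K_def by (simp add: divide_neg_pos)
  have h0: "h n 0 = q0 n" for n using hexp da(2) db(2) by simp
  have ge: "g 0 \<le> g t" if "\<bar>0 - t\<bar> < \<delta>" for t
  proof -
    have t: "\<bar>t\<bar> < \<delta>" using that by simp
    define Rt where "Rt = matrix_inv (transpose (F t) ** matrix_inv Rs ** F t)"
    have Rt: "Rt \<in> HP_real" "\<And>v. quad_real Rt v = (F t *v v) \<bullet> (matrix_inv Rs *v (F t *v v))"
      using pert_real[OF R Fdet[OF t]] Rt_def by auto
    have qt: "quad_real Rt (x n) = h n t" for n using Rt(2) Fx[OF t] unfolding h_def S_def by simp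
    have "l_real N x Rt \<le> l_real N x Rs" using opt Rt(1) by blast
    hence "K * g t \<le> K * g 0"
      unfolding l_real_def K_def[symmetric] g_def qt h0 q0_def by simp
    thus ?thesis using K by simp
  qed
  have dh: "((h n) has_real_derivative (2 * \<alpha>' * (a n \<bullet> (S *v x n)) + 2 * \<beta>' * (b n \<bullet> (S *v x n)))) (at 0)" for n
    unfolding hexp[abs_def]
    by (rule derivative_eq_intros da(1) db(1) refl | simp add: da(2) db(2))+
  have dg: "(g has_real_derivative (\<Sum>n<N. (2 * \<alpha>' * (a n \<bullet> (S *v x n)) + 2 * \<beta>' * (b n \<bullet> (S *v x n))) / q0 n)) (at 0)"
    unfolding g_def[abs_def]
    apply (rule DERIV_sum)
    apply (rule derivative_eq_intros dh | simp add: h0 q0pos)+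
    done
  have "(\<Sum>n<N. (2 * \<alpha>' * (a n \<bullet> (S *v x n)) + 2 * \<beta>' * (b n \<bullet> (S *v x n))) / q0 n) = 0"
    using DERIV_local_min[OF dg dl] ge by blast
  hence "2 * (\<Sum>n<N. (\<alpha>' * (a n \<bullet> (S *v x n)) + \<beta>' * (b n \<bullet> (S *v x n))) / q0 n) = 0"
    by (simp add: sum_distrib_left algebra_simps add_divide_distrib)
  thus ?thesis unfolding q0_def S_def by simp
qed



lemma shear_det:
  fixes i j :: "'n::finite" and c :: "'a::comm_ring_1"
  assumes "i \<noteq> j"
  shows "det ((\<chi> k l. (if k = l then 1 else 0) + (if k = i \<and> l = j then c else 0)) :: 'a^'n^'n) = 1"
proof -
  have "((\<chi> k l. (if k = l then 1 else 0) + (if k = i \<and> l = j then c else 0)) :: 'a^'n^'n)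
      = (\<chi> k. if k = i then row i (mat 1) + c *s row j (mat 1) else row k (mat 1))"
    using assms by (auto simp: vec_eq_iff row_def mat_def)
  thus ?thesis using det_row_operation[OF assms, of "mat 1" c] by simp
qed

lemma diag_det:
  fixes i j :: "'n::finite" and c :: "'a::field"
  assumes "i \<noteq> j" "c \<noteq> 0"
  shows "det ((\<chi> k l. if k = l then (if k = i then c else if k = j then 1 / c else 1) else 0) :: 'a^'n^'n) = 1"
proof -
  have "det ((\<chi> k l. if k = l then (if k = i then c else if k = j then 1 / c else 1) else 0) :: 'a^'n^'n)
     = (\<Prod>k\<in>UNIV. if k = i then c else if k = j then 1 / c else 1)"
    by (subst det_diagonal) auto
  also have "\<dots> = c * (\<Prod>k\<in>UNIV - {i}. if k = i then c else if k = j then 1 / c else 1)"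
    by (subst prod.remove[of UNIV i]) auto
  also have "(\<Prod>k\<in>UNIV - {i}. if k = i then c else if k = j then 1 / c else 1)
       = (1/c) * (\<Prod>k\<in>UNIV - {i} - {j}. if k = i then c else if k = j then 1 / c else 1)"
    using assms by (subst prod.remove[of "UNIV - {i}" j]) auto
  also have "(\<Prod>k\<in>UNIV - {i} - {j}. if k = i then c else if k = j then 1 / c else (1::'a)) = 1"
    by (rule prod.neutral) auto
  finally show ?thesis using assms by simp
qed

lemma shear_apply:
  fixes i j :: "'n::finite" and c :: "'a::comm_ring_1" and v :: "'a^'n"
  shows "((\<chi> k l. (if k = l then 1 else 0) + (if k = i \<and> l = j then c else 0)) :: 'a^'n^'n) *v v
     = v + c *s ((v $ j) *s axis i 1)"
proof -
  have "(\<Sum>l\<in>UNIV. ((if k = l then 1 else 0) + (if k = i \<and> l = j then c else 0)) * v$l)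
     = v $ k + (if k = i then c * v$j else 0)" for k
  proof -
    have e: "(\<lambda>l. ((if k = l then 1 else 0) + (if k = i \<and> l = j then c else 0)) * v$l)
      = (\<lambda>l. (if k = l then v$l else 0) + (if l = j then (if k = i then c * v$l else 0) else 0))"
      by (auto simp: fun_eq_iff algebra_simps)
    show ?thesis unfolding e sum.distrib by (simp add: sum.delta sum.delta' algebra_simps)
  qed
  thus ?thesis by (simp add: vec_eq_iff matrix_vector_mult_def axis_def)
qed

lemma diag_apply:
  fixes i j :: "'n::finite" and c :: "'a::field" and v :: "'a^'n"
  assumes "i \<noteq> j"
  shows "((\<chi> k l. if k = l then (if k = i then c else if k = j then 1 / c else 1) else 0) :: 'a^'n^'n) *v v
     = v + (c - 1) *s ((v $ i) *s axis i 1) + (1/c - 1) *s ((v $ j) *s axis j 1)"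
proof -
  have "(\<Sum>l\<in>UNIV. (if k = l then (if k = i then c else if k = j then 1 / c else 1) else 0) * v$l)
     = v $ k + (if k = i then (c - 1) * v$i else 0) + (if k = j then (1/c - 1) * v$j else 0)" for k
  proof -
    have e: "(\<lambda>l. (if k = l then (if k = i then c else if k = j then 1 / c else 1) else 0) * v$l)
      = (\<lambda>l. if k = l then (if k = i then c else if k = j then 1 / c else 1) * v$l else 0)"
      by (auto simp: fun_eq_iff)
    show ?thesis unfolding e using assms by (simp add: sum.delta algebra_simps)
  qed
  thus ?thesis by (simp add: vec_eq_iff matrix_vector_mult_def axis_def)
qed

lemma sR_real: "c *s (v::real^'n) = c *\<^sub>R v" by (simp add: vec_eq_iff)

lemma real_conds:
  fixes x :: "nat \<Rightarrow> real^'n" and Rs :: "real^'n^'n"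
  assumes R: "Rs \<in> HP_real" and opt: "\<forall>R\<in>HP_real. l_real N x R \<le> l_real N x Rs"
    and x: "\<forall>n<N. x n \<noteq> 0" and d2: "CARD('n) \<ge> 2" and N: "N \<ge> 1" and ij: "i \<noteq> j"
  shows "(\<Sum>n<N. (x n $ j) * (matrix_inv Rs *v x n)$i / quad_real Rs (x n)) = 0"
    and "(\<Sum>n<N. ((x n $ i) * (matrix_inv Rs *v x n)$i - (x n $ j) * (matrix_inv Rs *v x n)$j) / quad_real Rs (x n)) = 0"
proof -
  let ?F = "\<lambda>t::real. ((\<chi> k l. (if k = l then 1 else 0) + (if k = i \<and> l = j then t else 0)) :: real^'n^'n)"
  have "(\<Sum>n<N. (1 * (((x n $ j) *\<^sub>R axis i 1) \<bullet> (matrix_inv Rs *v x n)) + 0 * (0 \<bullet> (matrix_inv Rs *v x n)))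
            / quad_real Rs (x n)) = 0"
  proof (rule stationary_real[OF R opt x d2 N, of 1 ?F "\<lambda>t. t" "\<lambda>n. (x n $ j) *\<^sub>R axis i 1" "\<lambda>t. 0" "\<lambda>n. 0"])
    fix t :: real and n
    show "det (?F t) = 1" by (rule shear_det[OF ij])
    have "?F t *v x n = x n + t *s ((x n $ j) *s axis i 1)" by (rule shear_apply)
    thus "?F t *v x n = x n + t *\<^sub>R ((x n $ j) *\<^sub>R axis i 1) + 0 *\<^sub>R 0" by (simp only: sR_real) simp
  qed (auto intro: derivative_eq_intros)
  thus "(\<Sum>n<N. (x n $ j) * (matrix_inv Rs *v x n)$i / quad_real Rs (x n)) = 0"
    by (simp add: inner_axis')
  let ?G = "\<lambda>t::real. ((\<chi> k l. if k = l then (if k = i then 1 + t else if k = j then 1 / (1 + t) else 1) else 0) :: real^'n^'n)"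
  have "(\<Sum>n<N. (1 * (((x n $ i) *\<^sub>R axis i 1) \<bullet> (matrix_inv Rs *v x n)) + (-1) * (((x n $ j) *\<^sub>R axis j 1) \<bullet> (matrix_inv Rs *v x n)))
            / quad_real Rs (x n)) = 0"
  proof (rule stationary_real[OF R opt x d2 N, of "1/2" ?G "\<lambda>t. t" "\<lambda>n. (x n $ i) *\<^sub>R axis i 1" "\<lambda>t. 1/(1+t) - 1" "\<lambda>n. (x n $ j) *\<^sub>R axis j 1"])
    fix t :: real assume t: "\<bar>t\<bar> < 1/2"
    hence t1: "1 + t \<noteq> 0" by auto
    show "det (?G t) = 1" using diag_det[OF ij t1] by simp
    fix n show "?G t *v x n = x n + t *\<^sub>R (x n $ i *\<^sub>R axis i 1) + (1 / (1 + t) - 1) *\<^sub>R (x n $ j *\<^sub>R axis j 1)"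
      using diag_apply[OF ij, of "1+t" "x n"] by (simp only: sR_real) simp
  next
    show "((\<lambda>t::real. 1 / (1 + t) - 1) has_real_derivative -1) (at 0)"
      by (rule derivative_eq_intros refl | simp)+
  qed (auto intro: derivative_eq_intros)
  thus "(\<Sum>n<N. ((x n $ i) * (matrix_inv Rs *v x n)$i - (x n $ j) * (matrix_inv Rs *v x n)$j) / quad_real Rs (x n)) = 0"
    by (simp add: inner_axis')
qed



lemma scal_mat_mult: "((c::real) *\<^sub>R mat 1) ** (B::real^'n^'m) = c *\<^sub>R B"
proof -
  have "(\<Sum>l\<in>UNIV. c * (if k = l then 1 else 0) * B $ l $ m) = c * B $ k $ m" for k :: 'm and m :: 'n
  proof -
    have e: "(\<lambda>l. c * (if k = l then 1 else 0) * B $ l $ m) = (\<lambda>l. if k = l then c * B $ l $ m else 0)"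
      by auto
    show ?thesis unfolding e by (simp add: sum.delta sum.delta')
  qed
  thus ?thesis by (simp add: vec_eq_iff matrix_matrix_mult_def mat_def)
qed

lemma real_main:
  fixes x :: "nat \<Rightarrow> real^'n" and Rs :: "real^'n^'n"
  assumes R: "Rs \<in> HP_real" and opt: "\<forall>R\<in>HP_real. l_real N x R \<le> l_real N x Rs"
    and x: "\<forall>n<N. x n \<noteq> 0" and d2: "CARD('n) \<ge> 2" and N: "N \<ge> 1"
  shows "\<exists>c>0. Rs = c *\<^sub>R (\<Sum>n<N. (1 / quad_real Rs (x n)) *\<^sub>R outer_real (x n))"
proof -
  define S where "S = matrix_inv Rs"
  have sS: "spd S" using spd_inv HP_real_spd R S_def by blast
  hence tS: "transpose S = S" using spd_def by blast
  have iR: "invertible Rs" using spd_invertible HP_real_spd R by blast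
  define q0 where "q0 n = quad_real Rs (x n)" for n
  have q0: "q0 n = x n \<bullet> (S *v x n)" for n unfolding q0_def quad_real_def S_def ..
  have q0pos: "q0 n > 0" if "n < N" for n using x that sS q0 spd_def by auto
  define P where "P j k = (\<Sum>n<N. x n $ j * (S *v x n)$k / q0 n)" for j k
  have off: "P j k = 0" if "j \<noteq> k" for j k
    using real_conds(1)[OF R opt x d2 N, of k j] that unfolding P_def S_def q0_def by auto
  have dg: "P i i = P j j" for i j
  proof (cases "i = j")
    case False
    have "(\<Sum>n<N. ((x n $ i) * (S *v x n)$i - (x n $ j) * (S *v x n)$j) / q0 n) = 0"
      using real_conds(2)[OF R opt x d2 N False] unfolding S_def q0_def by auto
    thus ?thesis unfolding P_def by (simp add: diff_divide_distrib sum_subtractf)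
  qed simp
  obtain i0 :: 'n where True by blast
  define lam where "lam = P i0 i0"
  have "(\<Sum>k\<in>UNIV. P k k) = (\<Sum>n<N. (\<Sum>k\<in>UNIV. x n $ k * (S *v x n)$k) / q0 n)"
    unfolding P_def by (subst sum.swap) (simp add: sum_divide_distrib)
  also have "\<dots> = (\<Sum>n<N. 1)"
  proof (rule sum.cong)
    fix n assume "n \<in> {..<N}"
    hence "q0 n > 0" using q0pos by auto
    moreover have "(\<Sum>k\<in>UNIV. x n $ k * (S *v x n)$k) = q0 n" unfolding q0 inner_vec_def by simp
    ultimately show "(\<Sum>k\<in>UNIV. x n $ k * (S *v x n)$k) / q0 n = 1" by simp
  qed simp
  finally have "(\<Sum>k\<in>UNIV. P k k) = real N" by simp
  moreover have "(\<Sum>k\<in>UNIV. P k k) = real CARD('n) * lam" 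
  proof -
    have "(\<Sum>k\<in>UNIV. P k k) = (\<Sum>k\<in>(UNIV::'n set). lam)" unfolding lam_def using dg[of _ i0] by (intro sum.cong) auto
    thus ?thesis by simp
  qed
  ultimately have lam: "lam = real N / real CARD('n)" by (simp add: field_simps)
  hence lampos: "lam > 0" using N by simp
  define M where "M = (\<Sum>n<N. (1 / quad_real Rs (x n)) *\<^sub>R outer_real (x n))"
  have MS: "(M ** S) $ j $ k = P j k" for j k
  proof -
    have Sjk: "S $ l $ k = S $ k $ l" for l using tS by (metis transpose_def vec_lambda_beta)
    have "(M ** S) $ j $ k = (\<Sum>l\<in>UNIV. (\<Sum>n<N. (1 / q0 n) * (x n $ j * x n $ l)) * S $ l $ k)"
      unfolding M_def q0_def by (simp add: matrix_matrix_mult_def outer_real_def)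
    also have "\<dots> = (\<Sum>n<N. (\<Sum>l\<in>UNIV. (1 / q0 n) * (x n $ j * x n $ l) * S $ k $ l))"
      by (simp add: sum_distrib_right Sjk) (rule sum.swap)
    also have "\<dots> = P j k" unfolding P_def
      by (rule sum.cong) (simp_all add: matrix_vector_mult_def sum_distrib_left sum_divide_distrib mult_ac)
    finally show ?thesis .
  qed
  have "M ** S = lam *\<^sub>R mat 1"
    using MS off dg[of _ i0] unfolding lam_def by (auto simp: vec_eq_iff mat_def)
  hence "M = lam *\<^sub>R Rs"
    using inv_props(2)[OF iR] unfolding S_def by (metis matrix_mul_assoc matrix_mul_rid scal_mat_mult)
  hence "Rs = (1 / lam) *\<^sub>R M" using lampos by simp
  thus ?thesis using lampos M_def by (intro exI[of _ "1/lam"]) simp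
qed



section \<open>Complex\<close>

lemma cdot_conj: "cdot u v = cnj (cdot v u)"
  unfolding cdot_def by (simp add: cnj_sum mult.commute)

lemma cdot_add_right: "cdot u (v + w) = cdot u v + cdot u w"
  unfolding cdot_def by (simp add: distrib_left sum.distrib)
lemma cdot_add_left: "cdot (u + v) w = cdot u w + cdot v w"
  unfolding cdot_def by (simp add: distrib_right sum.distrib)
lemma cdot_smult_right: "cdot u (c *s v) = c * cdot u v"
  unfolding cdot_def by (simp add: sum_distrib_left mult_ac)
lemma cdot_smult_left: "cdot (c *s u) v = cnj c * cdot u v"
  unfolding cdot_def by (simp add: sum_distrib_left mult_ac)
lemma cdot_zero_left[simp]: "cdot 0 v = 0" unfolding cdot_def by simp
lemma cdot_zero_right[simp]: "cdot u 0 = 0" unfolding cdot_def by simp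

lemma cdot_adj: "cdot u (cadj A *v w) = cdot (A *v u) w"
proof -
  have "cdot u (cadj A *v w) = (\<Sum>i\<in>UNIV. \<Sum>l\<in>UNIV. cnj (u $ i) * (cnj (A $ l $ i) * w $ l))"
    unfolding cdot_def cadj_def matrix_vector_mult_def by (simp add: sum_distrib_left)
  also have "\<dots> = (\<Sum>l\<in>UNIV. \<Sum>i\<in>UNIV. cnj (u $ i) * (cnj (A $ l $ i) * w $ l))" by (rule sum.swap)
  also have "\<dots> = cdot (A *v u) w"
    unfolding cdot_def matrix_vector_mult_def by (simp add: cnj_sum sum_distrib_right sum_distrib_left mult_ac)
  finally show ?thesis .
qed

lemma herm_cdot:
  assumes "cadj A = A"
  shows "cdot u (A *v w) = cnj (cdot w (A *v u))"
  using cdot_adj[of u A w] assms cdot_conj by metis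

lemma cadj_mult: "cadj (A ** B) = cadj B ** cadj (A :: complex^_^_)"
  by (simp add: cadj_def matrix_matrix_mult_def vec_eq_iff cnj_sum mult.commute)

lemma cadj_mat1[simp]: "cadj (mat 1 :: complex^'n^'n) = mat 1"
  by (simp add: cadj_def mat_def vec_eq_iff)

lemma cadj_cadj[simp]: "cadj (cadj A) = (A :: complex^_^_)"
  by (simp add: cadj_def vec_eq_iff)

lemma det_cnj: "det (\<chi> i j. cnj (A $ i $ j)) = cnj (det (A :: complex^'n^'n))"
  unfolding det_def by (simp add: cnj_sum cnj_prod)

lemma det_cadj: "det (cadj A) = cnj (det (A :: complex^'n^'n))"
proof -
  have "cadj A = transpose (\<chi> i j. cnj (A $ i $ j))" by (simp add: cadj_def transpose_def)
  thus ?thesis using det_cnj det_transpose by metis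
qed

definition cpd :: "complex^'n^'n \<Rightarrow> bool" where
  "cpd A \<longleftrightarrow> cadj A = A \<and> (\<forall>v. v \<noteq> 0 \<longrightarrow> Im (cdot v (A *v v)) = 0 \<and> Re (cdot v (A *v v)) > 0)"

lemma cpd_invertible: "cpd A \<Longrightarrow> invertible A"
  unfolding cpd_def
  apply (rule invertible_inj)
  by (metis cdot_zero_right zero_complex.simps(1) less_irrefl)

lemma cpd_inv:
  fixes A :: "complex^'n^'n"
  assumes "cpd A" shows "cpd (matrix_inv A)"
proof -
  have iA: "invertible A" using cpd_invertible assms by blast
  have sA: "cadj A = A" using assms cpd_def by blast
  have "cadj (matrix_inv A) ** A = mat 1"
    by (metis inv_props(1)[OF iA] sA cadj_mult cadj_mat1)
  hence t: "cadj (matrix_inv A) = matrix_inv A" using inv_unique[OF iA] by metis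
  have "Im (cdot v (matrix_inv A *v v)) = 0 \<and> Re (cdot v (matrix_inv A *v v)) > 0" if "v \<noteq> 0" for v
  proof -
    define w where "w = matrix_inv A *v v"
    have v: "A *v w = v" unfolding w_def by (rule inv_apply(1)[OF iA])
    have "w \<noteq> 0" using that v by auto
    hence "Im (cdot w (A *v w)) = 0 \<and> Re (cdot w (A *v w)) > 0" using assms cpd_def by blast
    moreover have "cdot v (matrix_inv A *v v) = cnj (cdot w (A *v w))"
      using cdot_conj[of "A *v w" w] v unfolding w_def by simp
    ultimately show ?thesis by simp
  qed
  thus ?thesis using t cpd_def by blast
qed

lemma HP_complex_cpd: "R \<in> HP_complex \<Longrightarrow> cpd R"
  unfolding HP_complex_def cpd_def by auto

lemma pert_complex:
  fixes Rs F :: "complex^'n^'n"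
  assumes R: "Rs \<in> HP_complex" and F: "det F = 1"
  defines "Rt \<equiv> matrix_inv (cadj F ** matrix_inv Rs ** F)"
  shows "Rt \<in> HP_complex" "quad_complex Rt v = Re (cdot (F *v v) (matrix_inv Rs *v (F *v v)))"
proof -
  define S where "S = matrix_inv Rs"
  have sR: "cpd Rs" using R HP_complex_cpd by blast
  have iR: "invertible Rs" using cpd_invertible sR by blast
  have sS: "cpd S" using cpd_inv sR S_def by blast
  have dS: "det S = 1" using det_inv[OF iR] R unfolding S_def HP_complex_def by simp
  have iF: "invertible F" using invertible_of_det[of F] F by simp
  define St where "St = cadj F ** S ** F"
  have St_apply: "cdot u (St *v u) = cdot (F *v u) (S *v (F *v u))" for u
  proof -
    have "St *v u = cadj F *v (S *v (F *v u))" unfolding St_def by (simp add: matrix_vector_mul_assoc matrix_mul_assoc)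
    thus ?thesis by (simp add: cdot_adj)
  qed
  have "cpd St"
    unfolding cpd_def
  proof (intro conjI allI impI)
    show "cadj St = St" using sS unfolding St_def cpd_def
      by (simp add: cadj_mult matrix_mul_assoc)
    fix u :: "complex^'n" assume "u \<noteq> 0"
    hence "F *v u \<noteq> 0" using inv_apply(2)[OF iF, of u] by auto
    thus "Im (cdot u (St *v u)) = 0" "Re (cdot u (St *v u)) > 0" using sS cpd_def St_apply by auto
  qed
  have dSt: "det St = 1" unfolding St_def by (simp add: det_mul F dS det_cadj)
  have iSt: "invertible St" using cpd_invertible \<open>cpd St\<close> by blast
  have "Rt = matrix_inv St" unfolding Rt_def St_def S_def ..
  show "Rt \<in> HP_complex"
    using cpd_inv[OF \<open>cpd St\<close>] det_inv[OF iSt] dSt \<open>Rt = matrix_inv St\<close>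
    unfolding HP_complex_def cpd_def by auto
  show "quad_complex Rt v = Re (cdot (F *v v) (matrix_inv Rs *v (F *v v)))"
    unfolding quad_complex_def \<open>Rt = matrix_inv St\<close> inv_inv[OF iSt] St_apply S_def ..
qed

lemma mv_smult: "(A :: 'a::comm_ring_1^'n^'m) *v (c *s v) = c *s (A *v v)"
  by (simp add: vec_eq_iff matrix_vector_mult_def sum_distrib_left mult_ac)

lemma dquad:
  fixes f g :: "real \<Rightarrow> complex"
  assumes "(f has_vector_derivative f') (at 0)" "(g has_vector_derivative g') (at 0)" "f 0 = 0" "g 0 = 0"
  shows "((\<lambda>t. f t * g t * k) has_vector_derivative 0) (at 0)"
  using has_vector_derivative_mult_left[OF has_vector_derivative_mult[OF assms(1,2)], of k] assms(3,4) by simp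

lemma stationary_complex:
  fixes x a b :: "nat \<Rightarrow> complex^'n" and Rs :: "complex^'n^'n" and F :: "real \<Rightarrow> complex^'n^'n"
    and \<alpha> \<beta> :: "real \<Rightarrow> complex"
  assumes R: "Rs \<in> HP_complex" and opt: "\<forall>R\<in>HP_complex. l_complex N x R \<le> l_complex N x Rs"
    and x: "\<forall>n<N. x n \<noteq> 0" and d2: "CARD('n) \<ge> 2" and N: "N \<ge> 1"
    and dl: "\<delta> > 0" and Fdet: "\<And>t. \<bar>t\<bar> < \<delta> \<Longrightarrow> det (F t) = 1"
    and Fx: "\<And>t n. \<bar>t\<bar> < \<delta> \<Longrightarrow> F t *v x n = x n + \<alpha> t *s a n + \<beta> t *s b n"
    and da: "(\<alpha> has_vector_derivative \<alpha>') (at 0)" "\<alpha> 0 = 0"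
    and db: "(\<beta> has_vector_derivative \<beta>') (at 0)" "\<beta> 0 = 0"
  shows "(\<Sum>n<N. Re (cnj \<alpha>' * cdot (a n) (matrix_inv Rs *v x n) + cnj \<beta>' * cdot (b n) (matrix_inv Rs *v x n))
            / quad_complex Rs (x n)) = 0"
proof -
  define S where "S = matrix_inv Rs"
  have sS: "cpd S" using cpd_inv HP_complex_cpd R S_def by blast
  hence tS: "cadj S = S" using cpd_def by blast
  define q0 where "q0 n = quad_complex Rs (x n)" for n
  have q0: "q0 n = Re (cdot (x n) (S *v x n))" for n unfolding q0_def quad_complex_def S_def ..
  have q0pos: "q0 n > 0" if "n < N" for n using x that sS q0 cpd_def by auto
  define c where "c u w = cdot u (S *v w)" for u w
  define H where "H n t = cdot (x n + \<alpha> t *s a n + \<beta> t *s b n) (S *v (x n + \<alpha> t *s a n + \<beta> t *s b n))" for n t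
  have Hexp: "H n = (\<lambda>t. c (x n) (x n) + cnj (\<alpha> t) * c (a n) (x n) + cnj (\<beta> t) * c (b n) (x n)
      + \<alpha> t * c (x n) (a n) + \<beta> t * c (x n) (b n) + cnj (\<alpha> t) * \<alpha> t * c (a n) (a n)
      + cnj (\<alpha> t) * \<beta> t * c (a n) (b n) + cnj (\<beta> t) * \<alpha> t * c (b n) (a n) + cnj (\<beta> t) * \<beta> t * c (b n) (b n))" for n
    unfolding H_def c_def
    by (simp add: fun_eq_iff cdot_add_left cdot_add_right cdot_smult_left cdot_smult_right matrix_vector_right_distrib
        mv_smult algebra_simps)
  define h where "h n t = Re (H n t)" for n t
  define g where "g t = (\<Sum>n<N. ln (h n t))" for t
  define K where "K = - 2 * (real CARD('n) - 1) / (2 * real N)"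
  have K: "K < 0" using d2 N unfolding K_def by (simp add: divide_neg_pos)
  have h0: "h n 0 = q0 n" for n unfolding h_def Hexp using da(2) db(2) q0 c_def by simp
  have ge: "g 0 \<le> g t" if "\<bar>0 - t\<bar> < \<delta>" for t
  proof -
    have t: "\<bar>t\<bar> < \<delta>" using that by simp
    define Rt where "Rt = matrix_inv (cadj (F t) ** matrix_inv Rs ** F t)"
    have Rt: "Rt \<in> HP_complex" "\<And>v. quad_complex Rt v = Re (cdot (F t *v v) (matrix_inv Rs *v (F t *v v)))"
      using pert_complex[OF R Fdet[OF t]] Rt_def by auto
    have qt: "quad_complex Rt (x n) = h n t" for n using Rt(2) Fx[OF t] unfolding h_def H_def S_def by simp
    have "l_complex N x Rt \<le> l_complex N x Rs" using opt Rt(1) by blast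
    hence "K * g t \<le> K * g 0"
      unfolding l_complex_def K_def[symmetric] g_def qt h0 q0_def by simp
    thus ?thesis using K by simp
  qed
  have dca: "((\<lambda>t. cnj (\<alpha> t)) has_vector_derivative cnj \<alpha>') (at 0)" by (rule has_vector_derivative_cnj[OF da(1)])
  have dcb: "((\<lambda>t. cnj (\<beta> t)) has_vector_derivative cnj \<beta>') (at 0)" by (rule has_vector_derivative_cnj[OF db(1)])
  have dH: "(H n has_vector_derivative (cnj \<alpha>' * c (a n) (x n) + cnj \<beta>' * c (b n) (x n) + \<alpha>' * c (x n) (a n) + \<beta>' * c (x n) (b n))) (at 0)" for n
  proof -
    note L = has_vector_derivative_mult_left
    have "((\<lambda>t. c (x n) (x n) + cnj (\<alpha> t) * c (a n) (x n) + cnj (\<beta> t) * c (b n) (x n)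
      + \<alpha> t * c (x n) (a n) + \<beta> t * c (x n) (b n) + cnj (\<alpha> t) * \<alpha> t * c (a n) (a n)
      + cnj (\<alpha> t) * \<beta> t * c (a n) (b n) + cnj (\<beta> t) * \<alpha> t * c (b n) (a n) + cnj (\<beta> t) * \<beta> t * c (b n) (b n))
      has_vector_derivative (0 + cnj \<alpha>' * c (a n) (x n) + cnj \<beta>' * c (b n) (x n) + \<alpha>' * c (x n) (a n) + \<beta>' * c (x n) (b n) + 0 + 0 + 0 + 0)) (at 0)"
      by (intro has_vector_derivative_add has_vector_derivative_const L[OF dca] L[OF dcb] L[OF da(1)] L[OF db(1)]
          dquad[OF dca da(1)] dquad[OF dca db(1)] dquad[OF dcb da(1)] dquad[OF dcb db(1)]) (simp_all add: da(2) db(2))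
    thus ?thesis unfolding Hexp by simp
  qed
  have cx: "c (x n) (a n) = cnj (c (a n) (x n))" "c (x n) (b n) = cnj (c (b n) (x n))" for n
    unfolding c_def by (rule herm_cdot[OF tS])+
  have dh: "((h n) has_real_derivative (2 * Re (cnj \<alpha>' * c (a n) (x n) + cnj \<beta>' * c (b n) (x n)))) (at 0)" for n
  proof -
    have d: "((h n) has_real_derivative Re (cnj \<alpha>' * c (a n) (x n) + cnj \<beta>' * c (b n) (x n) + \<alpha>' * c (x n) (a n) + \<beta>' * c (x n) (b n))) (at 0)"
      using dH[of n] unfolding has_vector_derivative_complex_iff h_def[abs_def] by blast
    have eq: "Re (cnj \<alpha>' * c (a n) (x n) + cnj \<beta>' * c (b n) (x n) + \<alpha>' * c (x n) (a n) + \<beta>' * c (x n) (b n))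
       = 2 * Re (cnj \<alpha>' * c (a n) (x n) + cnj \<beta>' * c (b n) (x n))"
      unfolding cx by simp
    show ?thesis using d unfolding eq .
  qed
  have dg: "(g has_real_derivative (\<Sum>n<N. (2 * Re (cnj \<alpha>' * c (a n) (x n) + cnj \<beta>' * c (b n) (x n))) / q0 n)) (at 0)"
    unfolding g_def[abs_def]
    apply (rule DERIV_sum)
    apply (rule derivative_eq_intros dh | simp add: h0 q0pos)+
    done
  have "(\<Sum>n<N. (2 * Re (cnj \<alpha>' * c (a n) (x n) + cnj \<beta>' * c (b n) (x n))) / q0 n) = 0"
    using DERIV_local_min[OF dg dl] ge by blast
  hence "2 * (\<Sum>n<N. Re (cnj \<alpha>' * c (a n) (x n) + cnj \<beta>' * c (b n) (x n)) / q0 n) = 0"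
    by (simp add: sum_distrib_left)
  thus ?thesis unfolding q0_def S_def c_def by simp
qed



lemma cdot_axis: "cdot (c *s axis i 1) u = cnj c * u $ i"
proof -
  have "cdot (c *s axis i 1) u = (\<Sum>k\<in>UNIV. if k = i then cnj c * u $ k else 0)"
    unfolding cdot_def by (intro sum.cong) (auto simp: axis_def)
  thus ?thesis by (simp add: sum.delta')
qed

lemma dlin_w: "((\<lambda>t. complex_of_real t * w) has_vector_derivative w) (at 0)"
proof -
  have "((\<lambda>z. z * w) has_field_derivative w) (at (of_real 0))"
    by (rule derivative_eq_intros refl | simp)+
  from has_vector_derivative_real_field[OF this] show ?thesis by simp
qed

lemma dinv_w: "((\<lambda>t. 1 / (1 + complex_of_real t * w) - 1) has_vector_derivative - w) (at 0)"
proof -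
  have "((\<lambda>z. 1 / (1 + z * w) - 1) has_field_derivative - w) (at (of_real 0))"
    by (rule derivative_eq_intros refl | simp)+
  from has_vector_derivative_real_field[OF this] show ?thesis by simp
qed

lemma complex_conds:
  fixes x :: "nat \<Rightarrow> complex^'n" and Rs :: "complex^'n^'n"
  assumes R: "Rs \<in> HP_complex" and opt: "\<forall>R\<in>HP_complex. l_complex N x R \<le> l_complex N x Rs"
    and x: "\<forall>n<N. x n \<noteq> 0" and d2: "CARD('n) \<ge> 2" and N: "N \<ge> 1" and ij: "i \<noteq> j"
    and w: "cmod w \<le> 1"
  shows "(\<Sum>n<N. Re (cnj w * (cnj (x n $ j) * (matrix_inv Rs *v x n)$i)) / quad_complex Rs (x n)) = 0"
    and "(\<Sum>n<N. Re (cnj w * (cnj (x n $ i) * (matrix_inv Rs *v x n)$i) - cnj w * (cnj (x n $ j) * (matrix_inv Rs *v x n)$j))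
           / quad_complex Rs (x n)) = 0"
proof -
  let ?F = "\<lambda>t::real. ((\<chi> k l. (if k = l then 1 else 0) + (if k = i \<and> l = j then complex_of_real t * w else 0)) :: complex^'n^'n)"
  have "(\<Sum>n<N. Re (cnj w * cdot ((x n $ j) *s axis i 1) (matrix_inv Rs *v x n) + cnj 0 * cdot 0 (matrix_inv Rs *v x n))
            / quad_complex Rs (x n)) = 0"
  proof (rule stationary_complex[OF R opt x d2 N, of 1 ?F "\<lambda>t. complex_of_real t * w" "\<lambda>n. (x n $ j) *s axis i 1" "\<lambda>t. 0" "\<lambda>n. 0"])
    fix t :: real and n
    show "det (?F t) = 1" by (rule shear_det[OF ij])
    have "?F t *v x n = x n + (complex_of_real t * w) *s ((x n $ j) *s axis i 1)" by (rule shear_apply)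
    thus "?F t *v x n = x n + (complex_of_real t * w) *s ((x n $ j) *s axis i 1) + 0 *s 0" by simp
  qed (auto intro: dlin_w)
  thus "(\<Sum>n<N. Re (cnj w * (cnj (x n $ j) * (matrix_inv Rs *v x n)$i)) / quad_complex Rs (x n)) = 0"
    by (simp add: cdot_axis)
  let ?G = "\<lambda>t::real. ((\<chi> k l. if k = l then (if k = i then 1 + complex_of_real t * w else if k = j then 1 / (1 + complex_of_real t * w) else 1) else 0) :: complex^'n^'n)"
  have "(\<Sum>n<N. Re (cnj w * cdot ((x n $ i) *s axis i 1) (matrix_inv Rs *v x n) + cnj (-w) * cdot ((x n $ j) *s axis j 1) (matrix_inv Rs *v x n))
            / quad_complex Rs (x n)) = 0"
  proof (rule stationary_complex[OF R opt x d2 N, of "1/2" ?G "\<lambda>t. complex_of_real t * w" "\<lambda>n. (x n $ i) *s axis i 1" "\<lambda>t. 1 / (1 + complex_of_real t * w) - 1" "\<lambda>n. (x n $ j) *s axis j 1"])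
    fix t :: real assume t: "\<bar>t\<bar> < 1/2"
    have "cmod (complex_of_real t * w) < 1"
    proof -
      have "\<bar>t\<bar> * cmod w \<le> \<bar>t\<bar>" using w mult_left_le[of "cmod w" "\<bar>t\<bar>"] by simp
      thus ?thesis using t by (simp add: norm_mult)
    qed
    hence t1: "1 + complex_of_real t * w \<noteq> 0"
      by (metis add.inverse_unique norm_minus_cancel norm_one less_irrefl)
    show "det (?G t) = 1" using diag_det[OF ij t1] by simp
    fix n show "?G t *v x n = x n + (complex_of_real t * w) *s (x n $ i *s axis i 1) + (1 / (1 + complex_of_real t * w) - 1) *s (x n $ j *s axis j 1)"
      using diag_apply[OF ij, of "1 + complex_of_real t * w" "x n"] by simp
  qed (auto intro: dlin_w dinv_w)
  thus "(\<Sum>n<N. Re (cnj w * (cnj (x n $ i) * (matrix_inv Rs *v x n)$i) - cnj w * (cnj (x n $ j) * (matrix_inv Rs *v x n)$j))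
           / quad_complex Rs (x n)) = 0"
    by (simp add: cdot_axis)
qed



lemma scal_mat_mult_c: "((c::real) *\<^sub>R mat 1) ** (B::complex^'n^'m) = c *\<^sub>R B"
proof -
  have "(\<Sum>l\<in>UNIV. (c *\<^sub>R (if k = l then 1 else 0)) * B $ l $ m) = c *\<^sub>R B $ k $ m" for k :: 'm and m :: 'n
  proof -
    have e: "(\<lambda>l. (c *\<^sub>R (if k = l then 1 else 0)) * B $ l $ m) = (\<lambda>l. if k = l then c *\<^sub>R B $ l $ m else 0)"
      by auto
    show ?thesis unfolding e by (simp add: sum.delta sum.delta')
  qed
  thus ?thesis by (simp add: vec_eq_iff matrix_matrix_mult_def mat_def)
qed

lemma Re_sum_div:
  fixes z :: "nat \<Rightarrow> complex" and r :: "nat \<Rightarrow> real"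
  shows "Re (u * (\<Sum>n<N. z n / complex_of_real (r n))) = (\<Sum>n<N. Re (u * z n) / r n)"
proof -
  have "u * (\<Sum>n<N. z n / complex_of_real (r n)) = (\<Sum>n<N. (u * z n) / complex_of_real (r n))"
    by (simp add: sum_distrib_left)
  thus ?thesis by (simp add: Re_sum)
qed

lemma zero_from_Re: "Re z = 0 \<Longrightarrow> Re (cnj \<i> * z) = 0 \<Longrightarrow> z = (0::complex)"
  by (simp add: complex_eq_iff)

lemma complex_main:
  fixes x :: "nat \<Rightarrow> complex^'n" and Rs :: "complex^'n^'n"
  assumes R: "Rs \<in> HP_complex" and opt: "\<forall>R\<in>HP_complex. l_complex N x R \<le> l_complex N x Rs"
    and x: "\<forall>n<N. x n \<noteq> 0" and d2: "CARD('n) \<ge> 2" and N: "N \<ge> 1"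
  shows "\<exists>c>0. Rs = c *\<^sub>R (\<Sum>n<N. (1 / quad_complex Rs (x n)) *\<^sub>R outer_complex (x n))"
proof -
  define S where "S = matrix_inv Rs"
  have sS: "cpd S" using cpd_inv HP_complex_cpd R S_def by blast
  hence tS: "cadj S = S" using cpd_def by blast
  have iR: "invertible Rs" using cpd_invertible HP_complex_cpd R by blast
  define q0 where "q0 n = quad_complex Rs (x n)" for n
  have q0: "q0 n = Re (cdot (x n) (S *v x n))" for n unfolding q0_def quad_complex_def S_def ..
  have q0pos: "q0 n > 0" if "n < N" for n using x that sS q0 cpd_def by auto
  have q0c: "cdot (x n) (S *v x n) = complex_of_real (q0 n)" if "n < N" for n
  proof -
    have "Im (cdot (x n) (S *v x n)) = 0" using sS x that unfolding cpd_def by blast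
    thus ?thesis by (simp add: complex_eq_iff q0)
  qed
  define Z where "Z j k = (\<Sum>n<N. cnj (x n $ j) * (S *v x n)$k / complex_of_real (q0 n))" for j k
  have w1: "cmod (1::complex) \<le> 1" and wi: "cmod (\<i>) \<le> 1" by simp_all
  have off: "Z j k = 0" if "j \<noteq> k" for j k
  proof (rule zero_from_Re)
    show "Re (Z j k) = 0"
      using complex_conds(1)[OF R opt x d2 N _ w1, of k j] that Re_sum_div[of 1]
      unfolding Z_def S_def q0_def by simp
    show "Re (cnj \<i> * Z j k) = 0"
      using complex_conds(1)[OF R opt x d2 N _ wi, of k j] that Re_sum_div[of "cnj \<i>"]
      unfolding Z_def S_def q0_def by simp
  qed
  have dg: "Z i i = Z j j" for i j
  proof (cases "i = j")
    case False
    have "Z i i - Z j j = (\<Sum>n<N. (cnj (x n $ i) * (S *v x n)$i - cnj (x n $ j) * (S *v x n)$j) / complex_of_real (q0 n))"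
      unfolding Z_def by (simp add: diff_divide_distrib sum_subtractf)
    moreover have "Z i i - Z j j = 0"
    proof (rule zero_from_Re)
      show "Re (Z i i - Z j j) = 0"
        using complex_conds(2)[OF R opt x d2 N False w1] Re_sum_div[of 1] \<open>Z i i - Z j j = _\<close>
        unfolding S_def q0_def by (simp add: algebra_simps)
      show "Re (cnj \<i> * (Z i i - Z j j)) = 0"
        using complex_conds(2)[OF R opt x d2 N False wi] Re_sum_div[of "cnj \<i>"] \<open>Z i i - Z j j = _\<close>
        unfolding S_def q0_def by (simp add: algebra_simps)
    qed
    ultimately show ?thesis by simp
  qed simp
  obtain i0 :: 'n where True by blast
  have "(\<Sum>k\<in>UNIV. Z k k) = (\<Sum>n<N. (\<Sum>k\<in>UNIV. cnj (x n $ k) * (S *v x n)$k) / complex_of_real (q0 n))"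
    unfolding Z_def by (subst sum.swap) (simp add: sum_divide_distrib)
  also have "\<dots> = (\<Sum>n<N. 1)"
  proof (rule sum.cong)
    fix n assume "n \<in> {..<N}"
    hence "q0 n > 0" "cdot (x n) (S *v x n) = complex_of_real (q0 n)" using q0pos q0c by auto
    moreover have "(\<Sum>k\<in>UNIV. cnj (x n $ k) * (S *v x n)$k) = cdot (x n) (S *v x n)" unfolding cdot_def ..
    ultimately show "(\<Sum>k\<in>UNIV. cnj (x n $ k) * (S *v x n)$k) / complex_of_real (q0 n) = 1" by simp
  qed simp
  finally have "(\<Sum>k\<in>UNIV. Z k k) = of_nat N" by simp
  moreover have "(\<Sum>k\<in>UNIV. Z k k) = of_nat CARD('n) * Z i0 i0"
  proof -
    have "(\<Sum>k\<in>UNIV. Z k k) = (\<Sum>k\<in>(UNIV::'n set). Z i0 i0)" using dg[of _ i0] by (intro sum.cong) auto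
    thus ?thesis by simp
  qed
  ultimately have Zi0: "Z i0 i0 = complex_of_real (real N / real CARD('n))" by (simp add: field_simps)
  define lam where "lam = real N / real CARD('n)"
  have lampos: "lam > 0" using N unfolding lam_def by simp
  define M where "M = (\<Sum>n<N. (1 / quad_complex Rs (x n)) *\<^sub>R outer_complex (x n))"
  have MS: "(M ** S) $ j $ k = cnj (Z j k)" for j k
  proof -
    have Sc: "cnj (S $ k $ l) = S $ l $ k" for l
    proof -
      have "cadj S $ l $ k = S $ l $ k" using tS by simp
      thus ?thesis by (simp add: cadj_def)
    qed
    have lhs: "(M ** S) $ j $ k = (\<Sum>l\<in>UNIV. \<Sum>n<N. ((1 / q0 n) *\<^sub>R (x n $ j * cnj (x n $ l))) * S $ l $ k)"
      unfolding M_def q0_def by (simp add: matrix_matrix_mult_def outer_complex_def sum_distrib_right)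
    have rhs: "cnj (Z j k) = (\<Sum>n<N. \<Sum>l\<in>UNIV. x n $ j * (cnj (x n $ l) * S $ l $ k) / complex_of_real (q0 n))"
      unfolding Z_def by (simp add: cnj_sum matrix_vector_mult_def Sc sum_distrib_left sum_divide_distrib mult_ac)
    show ?thesis unfolding lhs rhs
      by (subst sum.swap) (intro sum.cong refl, simp add: scaleR_conv_of_real divide_inverse mult_ac)
  qed
  have "M ** S = lam *\<^sub>R mat 1"
    using MS off dg[of _ i0] Zi0 unfolding lam_def by (auto simp: vec_eq_iff mat_def simp flip: of_real_def)
  hence "M = lam *\<^sub>R Rs"
    using inv_props(2)[OF iR] unfolding S_def by (metis matrix_mul_assoc matrix_mul_rid scal_mat_mult_c)
  hence "Rs = (1 / lam) *\<^sub>R M" using lampos by simp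
  thus ?thesis using lampos M_def by (intro exI[of _ "1/lam"]) simp
qed


theorem mainTheorem1:
  assumes "CARD('n) \<ge> 2" and "N \<ge> 1"
  shows
   "(\<forall>(x :: nat \<Rightarrow> real^'n) (Rs :: real^'n^'n).
       (\<forall>n<N. x n \<noteq> 0) \<and> Rs \<in> HP_real \<and> (\<forall>R\<in>HP_real. l_real N x R \<le> l_real N x Rs)
       \<longrightarrow> (\<exists>c>0. Rs = c *\<^sub>R (\<Sum>n<N. (1 / quad_real Rs (x n)) *\<^sub>R outer_real (x n))))
  \<and> (\<forall>(x :: nat \<Rightarrow> complex^'n) (Rs :: complex^'n^'n).
       (\<forall>n<N. x n \<noteq> 0) \<and> Rs \<in> HP_complex \<and> (\<forall>R\<in>HP_complex. l_complex N x R \<le> l_complex N x Rs)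
       \<longrightarrow> (\<exists>c>0. Rs = c *\<^sub>R (\<Sum>n<N. (1 / quad_complex Rs (x n)) *\<^sub>R outer_complex (x n))))"
proof (intro conjI allI impI)
  fix x :: "nat \<Rightarrow> real^'n" and Rs :: "real^'n^'n"
  assume h: "(\<forall>n<N. x n \<noteq> 0) \<and> Rs \<in> HP_real \<and> (\<forall>R\<in>HP_real. l_real N x R \<le> l_real N x Rs)"
  show "\<exists>c>0. Rs = c *\<^sub>R (\<Sum>n<N. (1 / quad_real Rs (x n)) *\<^sub>R outer_real (x n))"
    using real_main[of Rs N x] h assms by blast
next
  fix x :: "nat \<Rightarrow> complex^'n" and Rs :: "complex^'n^'n"
  assume h: "(\<forall>n<N. x n \<noteq> 0) \<and> Rs \<in> HP_complex \<and> (\<forall>R\<in>HP_complex. l_complex N x R \<le> l_complex N x Rs)"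
  show "\<exists>c>0. Rs = c *\<^sub>R (\<Sum>n<N. (1 / quad_complex Rs (x n)) *\<^sub>R outer_complex (x n))"
    using complex_main[of Rs N x] h assms by blast
qed

end
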